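(* Let $T$ be a tree on $n$ vertices. Suppose there are a leaf $v$ of $T$ and an integer $k\ge1$ such that $|N_2(v)|=\lceil n/2\rceil-4+k$ and $|N_{\ge4}(v)|\ge k$. Then $\operatorname{diam}(\mathcal{C}_3(T))\ge\lfloor 3n/2\rfloor+1$.
   Context: For a vertex $v$ of a tree, $N_i(v)$ is the set of vertices at distance exactly $i$ from $v$ and $N_{\ge i}(v)$ the set of vertices at distance at least $i$ from $v$. A proper 3-coloring of a tree $T=(V,E)$ is a map $f\colon V\to\mathbb{Z}/3\mathbb{Z}$ with $f(u)\neq f(v)$ for every edge $uv\in E$. The 3-coloring graph $\mathcal{C}_3(T)$ has the proper 3-colorings as vertices, two colorings adjacent iff they differ at exactly one vertex; $\operatorname{diam}$ denotes graph diameter. *)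

theory Defs
  imports Main "HOL-Library.Extended_Nat" "HOL-Library.Numeral_Type" "HOL-Library.FuncSet"
begin

fun is_walk :: "('a \<Rightarrow> 'a \<Rightarrow> bool) \<Rightarrow> 'a list \<Rightarrow> bool" where
  "is_walk adj [] = False"
| "is_walk adj [x] = True"
| "is_walk adj (x # y # xs) = (adj x y \<and> is_walk adj (y # xs))"

text \<open>Graph distance (infinite if no walk exists).\<close>
definition gdist :: "'a set \<Rightarrow> ('a \<Rightarrow> 'a \<Rightarrow> bool) \<Rightarrow> 'a \<Rightarrow> 'a \<Rightarrow> enat" where
  "gdist S adj u v =
     (INF xs \<in> {xs. is_walk adj xs \<and> set xs \<subseteq> S \<and> hd xs = u \<and> last xs = v}.
        enat (length xs - 1))"

definition gdiam :: "'a set \<Rightarrow> ('a \<Rightarrow> 'a \<Rightarrow> bool) \<Rightarrow> enat" where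
  "gdiam S adj = (SUP u \<in> S. SUP v \<in> S. gdist S adj u v)"

definition simple_graph :: "'a set \<Rightarrow> ('a \<Rightarrow> 'a \<Rightarrow> bool) \<Rightarrow> bool" where
  "simple_graph V E \<longleftrightarrow> finite V \<and> (\<forall>u v. E u v \<longrightarrow> u \<in> V \<and> v \<in> V)
     \<and> (\<forall>u v. E u v \<longrightarrow> E v u) \<and> (\<forall>u. \<not> E u u)"

definition connected_graph :: "'a set \<Rightarrow> ('a \<Rightarrow> 'a \<Rightarrow> bool) \<Rightarrow> bool" where
  "connected_graph V E \<longleftrightarrow> V \<noteq> {} \<and> (\<forall>u\<in>V. \<forall>v\<in>V. gdist V E u v \<noteq> \<infinity>)"

definition has_cycle :: "'a set \<Rightarrow> ('a \<Rightarrow> 'a \<Rightarrow> bool) \<Rightarrow> bool" where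
  "has_cycle V E \<longleftrightarrow> (\<exists>xs. length xs \<ge> 3 \<and> distinct xs \<and> set xs \<subseteq> V
      \<and> is_walk E xs \<and> E (last xs) (hd xs))"

definition is_tree :: "'a set \<Rightarrow> ('a \<Rightarrow> 'a \<Rightarrow> bool) \<Rightarrow> bool" where
  "is_tree V E \<longleftrightarrow> simple_graph V E \<and> connected_graph V E \<and> \<not> has_cycle V E"

definition is_leaf :: "'a set \<Rightarrow> ('a \<Rightarrow> 'a \<Rightarrow> bool) \<Rightarrow> 'a \<Rightarrow> bool" where
  "is_leaf V E v \<longleftrightarrow> v \<in> V \<and> card {u \<in> V. E v u} = 1"

definition nbhd_eq :: "'a set \<Rightarrow> ('a \<Rightarrow> 'a \<Rightarrow> bool) \<Rightarrow> 'a \<Rightarrow> nat \<Rightarrow> 'a set" where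
  "nbhd_eq V E v i = {u \<in> V. gdist V E v u = enat i}"

definition nbhd_ge :: "'a set \<Rightarrow> ('a \<Rightarrow> 'a \<Rightarrow> bool) \<Rightarrow> 'a \<Rightarrow> nat \<Rightarrow> 'a set" where
  "nbhd_ge V E v i = {u \<in> V. gdist V E v u \<ge> enat i}"

text \<open>Proper 3-colourings with colours in Z/3Z (the type 3), as extensional maps on V.\<close>
definition proper_3col :: "'a set \<Rightarrow> ('a \<Rightarrow> 'a \<Rightarrow> bool) \<Rightarrow> ('a \<Rightarrow> 3) \<Rightarrow> bool" where
  "proper_3col V E f \<longleftrightarrow> f \<in> V \<rightarrow>\<^sub>E (UNIV :: 3 set) \<and> (\<forall>u v. E u v \<longrightarrow> f u \<noteq> f v)"

definition col3_vertices :: "'a set \<Rightarrow> ('a \<Rightarrow> 'a \<Rightarrow> bool) \<Rightarrow> ('a \<Rightarrow> 3) set" where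
  "col3_vertices V E = {f. proper_3col V E f}"

definition col3_adj :: "'a set \<Rightarrow> ('a \<Rightarrow> 3) \<Rightarrow> ('a \<Rightarrow> 3) \<Rightarrow> bool" where
  "col3_adj V f g \<longleftrightarrow> card {x \<in> V. f x \<noteq> g x} = 1"

definition diam_C3 :: "'a set \<Rightarrow> ('a \<Rightarrow> 'a \<Rightarrow> bool) \<Rightarrow> enat" where
  "diam_C3 V E = gdiam (col3_vertices V E) (col3_adj V)"

end

theory Submission
  imports Defs
begin
lemma ex3: "(x::3) = 0 \<or> x = 1 \<or> x = 2"
proof (cases x)
  case (of_int z)
  then have "z = 0 \<or> z = 1 \<or> z = 2" by simp arith
  then show ?thesis using of_int by auto
qed

lemma of_int3_0: "(of_int c :: 3) = 0 \<Longrightarrow> 3 dvd c"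
proof -
  assume a: "(of_int c :: 3) = 0"
  have "c = 3 * (c div 3) + c mod 3" by simp
  then have "(of_int c :: 3) = of_int (3 * (c div 3)) + of_int (c mod 3)"
    by (metis of_int_add)
  also have "(of_int (3 * (c div 3)) :: 3) = 0"
  proof -
    have "(3::3) = 0" by simp
    then show ?thesis by (simp only: of_int_mult of_int_numeral) simp
  qed
  finally have b: "(of_int (c mod 3) :: 3) = 0" using a by simp
  have "c mod 3 = 0 \<or> c mod 3 = 1 \<or> c mod 3 = 2" by arith
  then show ?thesis using b by auto
qed

lemma is_walk_append1: "is_walk adj xs \<Longrightarrow> adj (last xs) y \<Longrightarrow> is_walk adj (xs @ [y])"
  by (induction adj xs rule: is_walk.induct) auto

lemma is_walk_butlast: "is_walk adj xs \<Longrightarrow> length xs \<ge> 2 \<Longrightarrow>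
   is_walk adj (butlast xs) \<and> adj (last (butlast xs)) (last xs)"
proof (induction adj xs rule: is_walk.induct)
  case (3 adj x y xs)
  show ?case
  proof (cases xs)
    case Nil
    then show ?thesis using 3 by simp
  next
    case (Cons z zs)
    have "is_walk adj (butlast (y#xs)) \<and> adj (last (butlast (y#xs))) (last (y#xs))"
      using 3 Cons by simp
    then show ?thesis using 3 Cons by simp
  qed
next
  case (1 adj)
  then show ?case by simp
next
  case (2 adj x)
  then show ?case by simp
qed

lemma is_walk_const: "is_walk adj xs \<Longrightarrow> (\<forall>a b. adj a b \<longrightarrow> F a = F b) \<Longrightarrow> F (hd xs) = F (last xs)"
proof (induction adj xs rule: is_walk.induct)
  case (3 adj x y xs)
  have w: "adj x y" "is_walk adj (y#xs)" using 3(2) by simp_all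
  have a: "F x = F y" using 3(3) w(1) by blast
  have "F (hd (y#xs)) = F (last (y#xs))" using 3(1) w(2) 3(3) by blast
  then show ?case using a by simp
next
  case (1 adj) then show ?case by simp
next
  case (2 adj x) then show ?case by simp
qed

lemma gdist_le: "is_walk adj xs \<Longrightarrow> set xs \<subseteq> S \<Longrightarrow> hd xs = u \<Longrightarrow> last xs = w \<Longrightarrow>
   gdist S adj u w \<le> enat (length xs - 1)"
  unfolding gdist_def by (rule INF_lower) blast

lemma gdist_lower: "(\<And>xs. is_walk adj xs \<Longrightarrow> set xs \<subseteq> S \<Longrightarrow> hd xs = u \<Longrightarrow> last xs = w \<Longrightarrow> N \<le> length xs - 1)
   \<Longrightarrow> enat N \<le> gdist S adj u w"
  unfolding gdist_def by (rule INF_greatest) (simp only: mem_Collect_eq enat_ord_simps)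

lemma gdist_ex: assumes "gdist S adj u w \<noteq> \<infinity>"
  shows "\<exists>xs. is_walk adj xs \<and> set xs \<subseteq> S \<and> hd xs = u \<and> last xs = w \<and> gdist S adj u w = enat (length xs - 1)"
proof -
  let ?W = "{xs. is_walk adj xs \<and> set xs \<subseteq> S \<and> hd xs = u \<and> last xs = w}"
  let ?F = "(\<lambda>xs. enat (length xs - 1)) ` ?W"
  have g: "gdist S adj u w = Inf ?F" unfolding gdist_def by simp
  have "?F \<noteq> {}"
  proof
    assume "?F = {}"
    then have "Inf ?F = \<infinity>" by (simp add: Inf_enat_def)
    then show False using assms g by simp
  qed
  then have "Inf ?F \<in> ?F" unfolding Inf_enat_def by (auto intro: LeastI)
  then obtain xs where "xs \<in> ?W" "Inf ?F = enat (length xs - 1)" by (auto simp only: image_iff)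
  then show ?thesis using g by (intro exI[of _ xs]) simp
qed

definition Dst :: "'a set \<Rightarrow> ('a \<Rightarrow> 'a \<Rightarrow> bool) \<Rightarrow> 'a \<Rightarrow> 'a \<Rightarrow> nat" where
  "Dst V E v x = the_enat (gdist V E v x)"

locale treeloc =
  fixes V :: "'a set" and E :: "'a \<Rightarrow> 'a \<Rightarrow> bool" and v :: 'a
  assumes tree: "is_tree V E" and vV: "v \<in> V"
begin

abbreviation "D \<equiv> Dst V E v"

lemma finV: "finite V" using tree unfolding is_tree_def simple_graph_def by blast
lemma Ein: "E a b \<Longrightarrow> a \<in> V \<and> b \<in> V" using tree unfolding is_tree_def simple_graph_def by blast
lemma Esym: "E a b \<Longrightarrow> E b a" using tree unfolding is_tree_def simple_graph_def by blast
lemma Eirr: "\<not> E a a" using tree unfolding is_tree_def simple_graph_def by blast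
lemma nocyc: "\<not> has_cycle V E" using tree unfolding is_tree_def by blast
lemma conn: "x \<in> V \<Longrightarrow> gdist V E v x \<noteq> \<infinity>"
  using tree vV unfolding is_tree_def connected_graph_def by blast

lemma gd: "x \<in> V \<Longrightarrow> gdist V E v x = enat (D x)"
proof -
  assume a: "x \<in> V"
  obtain i where "gdist V E v x = enat i" using conn[OF a] by (cases "gdist V E v x") auto
  then show ?thesis unfolding Dst_def by simp
qed

lemma walkD: assumes "x \<in> V"
  shows "\<exists>xs. is_walk E xs \<and> set xs \<subseteq> V \<and> hd xs = v \<and> last xs = x \<and> D x = length xs - 1"
proof -
  obtain xs where "is_walk E xs" "set xs \<subseteq> V" "hd xs = v" "last xs = x"
     "gdist V E v x = enat (length xs - 1)"
    using gdist_ex[OF conn[OF assms]] by blast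
  then show ?thesis using gd[OF assms] by (intro exI[of _ xs]) simp
qed

lemma D_le_walk: "is_walk E xs \<Longrightarrow> set xs \<subseteq> V \<Longrightarrow> hd xs = v \<Longrightarrow> last xs = x \<Longrightarrow> D x \<le> length xs - 1"
proof -
  assume a: "is_walk E xs" "set xs \<subseteq> V" "hd xs = v" "last xs = x"
  have "xs \<noteq> []" using a(1) by (cases xs) auto
  then have "x \<in> V" using a by auto
  then show ?thesis using gdist_le[OF a] gd by simp
qed

lemma D_v: "D v = 0"
  using D_le_walk[of "[v]" v] vV by simp

lemma D_0: assumes "x \<in> V" "D x = 0" shows "x = v"
proof -
  obtain xs where w: "is_walk E xs" "set xs \<subseteq> V" "hd xs = v" "last xs = x" "D x = length xs - 1"
    using walkD[OF assms(1)] by blast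
  have "xs \<noteq> []" using w(1) by (cases xs) auto
  then have "length xs = 1" using w(5) assms(2) by (cases xs) auto
  then obtain a where "xs = [a]" by (cases xs) auto
  then show ?thesis using w by simp
qed

lemma D_adj: assumes "E x y" shows "D y \<le> Suc (D x)"
proof -
  have xy: "x \<in> V" "y \<in> V" using Ein[OF assms] by auto
  obtain xs where w: "is_walk E xs" "set xs \<subseteq> V" "hd xs = v" "last xs = x" "D x = length xs - 1"
    using walkD[OF xy(1)] by blast
  have ne: "xs \<noteq> []" using w(1) by (cases xs) auto
  have "is_walk E (xs @ [y])" using is_walk_append1[OF w(1)] w(4) assms by simp
  moreover have "set (xs @ [y]) \<subseteq> V" using w(2) xy by simp
  moreover have "hd (xs @ [y]) = v" using w(3) ne by simp
  moreover have "last (xs @ [y]) = y" by simp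
  ultimately have "D y \<le> length (xs @ [y]) - 1" by (rule D_le_walk)
  then show ?thesis using w(5) ne by simp
qed

lemma D_pred: assumes "x \<in> V" "D x = Suc t" shows "\<exists>x'. E x' x \<and> D x' = t"
proof -
  obtain xs where w: "is_walk E xs" "set xs \<subseteq> V" "hd xs = v" "last xs = x" "D x = length xs - 1"
    using walkD[OF assms(1)] by blast
  have len: "length xs = Suc (Suc t)" using w(5) assms(2) by simp
  then have "length xs \<ge> 2" by simp
  from is_walk_butlast[OF w(1) this]
  have b: "is_walk E (butlast xs)" "E (last (butlast xs)) (last xs)" by auto
  let ?x = "last (butlast xs)"
  have ne: "butlast xs \<noteq> []" using len by (cases xs) auto
  have "set (butlast xs) \<subseteq> V" using w(2) by (meson in_set_butlastD subset_iff)
  moreover have "hd (butlast xs) = v" using w(3) ne by (cases xs) auto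
  ultimately have "D ?x \<le> length (butlast xs) - 1" using D_le_walk[OF b(1)] by blast
  then have le: "D ?x \<le> t" using len by simp
  have "D x \<le> Suc (D ?x)" using D_adj b(2) w(4) by simp
  then have "D ?x = t" using le assms(2) by simp
  then show ?thesis using b(2) w(4) by auto
qed

lemma cyc_aux:
  shows "\<And>x y W. D x = t \<Longrightarrow> D y = t \<Longrightarrow> x \<in> V \<Longrightarrow> y \<in> V \<Longrightarrow> x \<noteq> y \<Longrightarrow> is_walk E W \<Longrightarrow>
    distinct W \<Longrightarrow> set W \<subseteq> V \<Longrightarrow> hd W = x \<Longrightarrow> last W = y \<Longrightarrow> (\<forall>z\<in>set W. D z \<ge> t) \<Longrightarrow>
    length W \<ge> 2 \<Longrightarrow> has_cycle V E"
proof (induction t)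
  case 0
  then have "x = v" "y = v" using D_0 by auto
  then show ?case using 0 by simp
next
  case (Suc t x y W)
  obtain x' where x': "E x' x" "D x' = t" using D_pred Suc.prems by blast
  obtain y' where y': "E y' y" "D y' = t" using D_pred Suc.prems by blast
  have x'V: "x' \<in> V" and y'V: "y' \<in> V" using Ein x'(1) Ein y'(1) by auto
  have x'W: "x' \<notin> set W" using Suc.prems(11) x'(2) by fastforce
  have y'W: "y' \<notin> set W" using Suc.prems(11) y'(2) by fastforce
  obtain W' where W': "W = x # W'" using Suc.prems(6,9) by (cases W) auto
  show ?case
  proof (cases "x' = y'")
    case True
    let ?C = "x' # W"
    have "length ?C \<ge> 3" using Suc.prems(12) by simp
    moreover have "distinct ?C" using Suc.prems(7) x'W by simp
    moreover have "set ?C \<subseteq> V" using Suc.prems(8) x'V by simp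
    moreover have "is_walk E ?C" using Suc.prems(6) x'(1) W' by simp
    moreover have "E (last ?C) (hd ?C)" using Suc.prems(10) y'(1) True W' Esym by simp
    ultimately show ?thesis unfolding has_cycle_def by blast
  next
    case False
    let ?W = "x' # W @ [y']"
    have "is_walk E (W @ [y'])" using is_walk_append1[OF Suc.prems(6)] Suc.prems(10) Esym y'(1) by simp
    then have w: "is_walk E ?W" using x'(1) W' by simp
    have d: "distinct ?W" using Suc.prems(7) x'W y'W False by simp
    have s: "set ?W \<subseteq> V" using Suc.prems(8) x'V y'V by simp
    have dz: "\<forall>z\<in>set ?W. D z \<ge> t" using Suc.prems(11) x'(2) y'(2) by fastforce
    show ?thesis using Suc.IH[OF x'(2) y'(2) x'V y'V False w d s _ _ dz] by simp
  qed
qed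

lemma D_ne: assumes "E x y" shows "D x \<noteq> D y"
proof
  assume eq: "D x = D y"
  have xy: "x \<in> V" "y \<in> V" using Ein[OF assms] by auto
  have ne: "x \<noteq> y" using assms Eirr by auto
  have "has_cycle V E"
    by (rule cyc_aux[of x "D x" y "[x,y]"]) (use eq xy ne assms in auto)
  then show False using nocyc by simp
qed

lemma D_edge: assumes "E x y" shows "D y = Suc (D x) \<or> D x = Suc (D y)"
  using D_adj[OF assms] D_adj[OF Esym[OF assms]] D_ne[OF assms] by arith

lemma D_1: assumes "x \<in> V" shows "D x = 1 \<longleftrightarrow> E v x"
proof
  assume "D x = 1"
  then obtain x' where "E x' x" "D x' = 0" using D_pred[OF assms] by auto
  then show "E v x" using D_0 Ein by blast
next
  assume e: "E v x"
  have "D x \<le> 1" using D_adj[OF e] D_v by simp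
  moreover have "D x \<noteq> 0" using D_0 assms e Eirr by blast
  ultimately show "D x = 1" by simp
qed

end

definition sig :: "('a \<Rightarrow> 3) \<Rightarrow> 'a \<Rightarrow> 'a \<Rightarrow> int" where
  "sig c a b = (if c a - c b = 1 then 1 else -1)"

lemma bash1: "(cz::3) \<noteq> cb \<Longrightarrow> c1z \<noteq> cb \<Longrightarrow> c1z \<noteq> cz \<Longrightarrow>
  (if c1z - cz = 1 then -2 else 2) = (if c1z - cb = 1 then 1 else -1) - (if cz - cb = 1 then 1 else (-1::int))"
  using ex3[of cz] ex3[of c1z] ex3[of cb] by auto

lemma bash2: "(cz::3) \<noteq> cb \<Longrightarrow> c1z \<noteq> cb \<Longrightarrow> c1z \<noteq> cz \<Longrightarrow>
  - (if c1z - cz = 1 then -2 else 2) = (if cb - c1z = 1 then 1 else -1) - (if cb - cz = 1 then 1 else (-1::int))"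
  using ex3[of cz] ex3[of c1z] ex3[of cb] by auto

lemma bash3: "of_int h = (cz::3) \<Longrightarrow> c1z \<noteq> cz \<Longrightarrow> of_int (h + (if c1z - cz = 1 then -2 else 2)) = c1z"
  using ex3[of cz] ex3[of c1z] by (auto simp: of_int_add)

lemma walk_inv:
  assumes Ein: "\<And>a b. E a b \<Longrightarrow> a \<in> V \<and> b \<in> V" and irr: "\<And>a. \<not> E a a" and fin: "finite V"
  shows "is_walk (col3_adj V) cs \<Longrightarrow> set cs \<subseteq> col3_vertices V E \<Longrightarrow> (\<forall>x\<in>V. of_int (H x) = hd cs x) \<Longrightarrow>
   \<exists>H'. (\<forall>x\<in>V. of_int (H' x) = last cs x) \<and> (\<forall>x. even (H' x - H x)) \<and>
     (\<forall>a b. E a b \<longrightarrow> H' a - H' b - sig (last cs) a b = H a - H b - sig (hd cs) a b) \<and>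
     (\<Sum>x\<in>V. \<bar>H' x - H x\<bar>) \<le> 2 * int (length cs - 1)"
proof (induction cs arbitrary: H)
  case Nil then show ?case by simp
next
  case (Cons c cs)
  note IH = Cons.IH and prems = Cons.prems
  show ?case
  proof (cases cs)
    case Nil
    show ?thesis using prems Nil by (intro exI[of _ H]) simp
  next
    case (Cons c1 cs')
    have adj: "col3_adj V c c1" and w1: "is_walk (col3_adj V) cs" using prems(1) Cons by simp_all
    have s1: "set cs \<subseteq> col3_vertices V E" using prems(2) by simp
    have "c \<in> col3_vertices V E" using prems(2) by simp
    then have "proper_3col V E c" unfolding col3_vertices_def by simp
    then have pc: "\<And>a b. E a b \<Longrightarrow> c a \<noteq> c b" unfolding proper_3col_def by blast
    have "c1 \<in> col3_vertices V E" using prems(2) Cons by simp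
    then have "proper_3col V E c1" unfolding col3_vertices_def by simp
    then have pc1: "\<And>a b. E a b \<Longrightarrow> c1 a \<noteq> c1 b" unfolding proper_3col_def by blast
    obtain z where Z: "{x\<in>V. c x \<noteq> c1 x} = {z}"
      using adj unfolding col3_adj_def by (rule card_1_singletonE)
    have "z \<in> {x\<in>V. c x \<noteq> c1 x}" unfolding Z by simp
    then have zV: "z \<in> V" and czz: "c1 z \<noteq> c z" by (simp_all add: eq_commute)
    have same: "\<And>w. w \<in> V \<Longrightarrow> w \<noteq> z \<Longrightarrow> c1 w = c w"
    proof (rule ccontr)
      fix w assume w: "w \<in> V" "w \<noteq> z" "c1 w \<noteq> c w"
      then have "w \<in> {x\<in>V. c x \<noteq> c1 x}" by (simp add: eq_commute)
      then have "w \<in> {z}" unfolding Z .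
      then show False using w(2) by simp
    qed
    define \<delta> where "\<delta> = (if c1 z - c z = 1 then -2 else (2::int))"
    define H1 where "H1 = H(z := H z + \<delta>)"
    have hH: "\<forall>x\<in>V. of_int (H x) = c x" using prems(3) by simp
    have hd1: "\<forall>x\<in>V. of_int (H1 x) = hd cs x"
    proof
      fix x assume xV: "x \<in> V"
      show "of_int (H1 x) = hd cs x"
      proof (cases "x = z")
        case True
        then show ?thesis unfolding H1_def \<delta>_def using bash3[OF hH[rule_format, OF zV] czz] Cons by simp
      next
        case False
        then show ?thesis unfolding H1_def using hH xV same[OF xV False] Cons by simp
      qed
    qed
    obtain H' where H': "\<forall>x\<in>V. of_int (H' x) = last cs x" "\<forall>x. even (H' x - H1 x)"
      "\<forall>a b. E a b \<longrightarrow> H' a - H' b - sig (last cs) a b = H1 a - H1 b - sig (hd cs) a b"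
      "(\<Sum>x\<in>V. \<bar>H' x - H1 x\<bar>) \<le> 2 * int (length cs - 1)"
      using IH[OF w1 s1 hd1] by blast
    have lst: "last (c # cs) = last cs" using Cons by simp
    have hdc: "hd cs = c1" using Cons by simp
    have ev\<delta>: "even \<delta>" unfolding \<delta>_def by simp
    have diff: "\<And>x. H1 x - H x = (if x = z then \<delta> else 0)" unfolding H1_def by simp
    have ev: "\<forall>x. even (H' x - H x)"
    proof
      fix x
      have "H' x - H x = (H' x - H1 x) + (H1 x - H x)" by simp
      then show "even (H' x - H x)" using H'(2) diff[of x] ev\<delta> by (metis even_add even_zero)
    qed
    have edge: "\<forall>a b. E a b \<longrightarrow> H1 a - H1 b - sig c1 a b = H a - H b - sig c a b"
    proof (intro allI impI)
      fix a b assume e: "E a b"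
      have aV: "a \<in> V" and bV: "b \<in> V" using Ein[OF e] by auto
      have ab: "a \<noteq> b" using e irr by auto
      show "H1 a - H1 b - sig c1 a b = H a - H b - sig c a b"
      proof (cases "a = z")
        case True
        then have "b \<noteq> z" using ab by simp
        then have cb: "c1 b = c b" using same bV by simp
        have e1: "c z \<noteq> c b" using pc[OF e] True by metis
        have e2: "c1 z \<noteq> c b" using pc1[OF e] True cb by metis
        have s1: "sig c1 a b = (if c1 z - c b = 1 then 1 else -1)" unfolding sig_def True cb ..
        have s2: "sig c a b = (if c z - c b = 1 then 1 else -1)" unfolding sig_def True ..
        have "\<delta> = sig c1 a b - sig c a b" unfolding s1 s2 \<delta>_def by (rule bash1[OF e1 e2 czz])
        then show ?thesis unfolding H1_def using True \<open>b \<noteq> z\<close> by simp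
      next
        case False
        note az = False
        show ?thesis
        proof (cases "b = z")
          case True
          have ca: "c1 a = c a" using same aV az by simp
          have e1: "c z \<noteq> c a" using pc[OF e] True by metis
          have e2: "c1 z \<noteq> c a" using pc1[OF e] True ca by metis
          have s1: "sig c1 a b = (if c a - c1 z = 1 then 1 else -1)" unfolding sig_def True ca ..
          have s2: "sig c a b = (if c a - c z = 1 then 1 else -1)" unfolding sig_def True ..
          have "- \<delta> = sig c1 a b - sig c a b" unfolding s1 s2 \<delta>_def by (rule bash2[OF e1 e2 czz])
          then show ?thesis unfolding H1_def using True az by simp
        next
          case False
          have "c1 a = c a" "c1 b = c b" using same aV bV az False by auto
          then show ?thesis unfolding H1_def sig_def using az False by simp
        qed
      qed
    qed
    have sum1: "(\<Sum>x\<in>V. \<bar>H1 x - H x\<bar>) = 2"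
    proof -
      have "(\<Sum>x\<in>V. \<bar>H1 x - H x\<bar>) = (\<Sum>x\<in>V. if x = z then 2 else 0)"
        by (rule sum.cong) (auto simp: diff \<delta>_def)
      also have "\<dots> = 2" using fin zV by simp
      finally show ?thesis .
    qed
    have "(\<Sum>x\<in>V. \<bar>H' x - H x\<bar>) \<le> (\<Sum>x\<in>V. \<bar>H' x - H1 x\<bar> + \<bar>H1 x - H x\<bar>)"
      by (rule sum_mono) linarith
    also have "\<dots> = (\<Sum>x\<in>V. \<bar>H' x - H1 x\<bar>) + 2" by (simp add: sum.distrib sum1)
    also have "\<dots> \<le> 2 * int (length cs - 1) + 2" using H'(4) by simp
    also have "\<dots> = 2 * int (length (c # cs) - 1)" using Cons by simp
    finally have sm: "(\<Sum>x\<in>V. \<bar>H' x - H x\<bar>) \<le> 2 * int (length (c # cs) - 1)" .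
    have ed: "\<forall>a b. E a b \<longrightarrow> H' a - H' b - sig (last (c # cs)) a b = H a - H b - sig (hd (c # cs)) a b"
    proof (intro allI impI)
      fix a b assume e: "E a b"
      have "H' a - H' b - sig (last cs) a b = H1 a - H1 b - sig c1 a b" using H'(3) e hdc by simp
      also have "\<dots> = H a - H b - sig c a b" using edge e by simp
      finally show "H' a - H' b - sig (last (c # cs)) a b = H a - H b - sig (hd (c # cs)) a b"
        using lst by simp
    qed
    show ?thesis using H'(1) lst ev ed sm by (intro exI[of _ H']) simp
  qed
qed

lemma threshold: assumes "P (a::nat)" "\<not> P b" "a \<le> b" shows "\<exists>t\<ge>a. P t \<and> \<not> P (Suc t)"
proof (rule ccontr)
  assume "\<not> ?thesis"
  then have step: "\<And>t. t \<ge> a \<Longrightarrow> P t \<Longrightarrow> P (Suc t)" by blast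
  have "P (a + j)" for j
  proof (induction j)
    case 0 then show ?case using assms(1) by simp
  next
    case (Suc j) then show ?case using step[of "a + j"] by simp
  qed
  then have "P (a + (b - a))" .
  then show False using assms by simp
qed

lemma sum_ind: "finite A \<Longrightarrow> (\<Sum>x\<in>A. if P x then 1 else 0 :: int) = int (card {x\<in>A. P x})"
  by (simp add: sum.inter_filter[symmetric])

lemma col_edge_aux: "(u::int) = 1 \<or> u = -1 \<Longrightarrow> w = 0 \<or> w = -u \<Longrightarrow>
  (of_int u::3) \<noteq> 0 \<and> (of_int (u + 2*w)::3) \<noteq> 0 \<and>
  u + 2*w = u + (if (of_int (u+2*w)::3) = 1 then 1 else -1) - (if (of_int u::3) = 1 then 1 else -1)"
  by (elim disjE) simp_all

lemma col_edge: fixes p q dp dq :: int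
  assumes "p - q = 1 \<or> p - q = -1" "dp - dq = 0 \<or> dp - dq = -(p - q)"
  shows "(of_int p::3) \<noteq> of_int q \<and> (of_int (p + 2*dp)::3) \<noteq> of_int (q + 2*dq) \<and>
   (p + 2*dp) - (q + 2*dq) = p - q + (if (of_int (p + 2*dp)::3) - of_int (q + 2*dq) = 1 then 1 else -1)
      - (if (of_int p::3) - of_int q = 1 then 1 else -1)"
proof -
  have A: "(of_int p::3) - of_int q = of_int (p - q)" by (simp only: of_int_diff)
  have B: "(of_int (p + 2*dp)::3) - of_int (q + 2*dq) = of_int ((p - q) + 2 * (dp - dq))"
    by (simp only: of_int_diff[symmetric]) (simp add: algebra_simps)
  have A': "(of_int p::3) \<noteq> of_int q \<longleftrightarrow> (of_int p::3) - of_int q \<noteq> 0" by simp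
  have B': "(of_int (p + 2*dp)::3) \<noteq> of_int (q + 2*dq) \<longleftrightarrow> (of_int (p + 2*dp)::3) - of_int (q + 2*dq) \<noteq> 0" by simp
  have C: "(p + 2*dp) - (q + 2*dq) = (p - q) + 2 * (dp - dq)" by simp
  show ?thesis unfolding A' B' unfolding A B C using col_edge_aux[OF assms] .
qed

lemma ceil_half: "\<lceil>real n / 2\<rceil> = int ((n + 1) div 2)"
proof -
  have "\<lceil>real n / 2\<rceil> = - \<lfloor>(of_int (- int n) :: real) / of_int 2\<rfloor>" unfolding ceiling_def by simp
  also have "\<dots> = - ((- int n) div 2)" by (simp only: floor_divide_of_int_eq)
  also have "\<dots> = int ((n + 1) div 2)" by presburger
  finally show ?thesis .
qed

lemma floor_3half: "nat \<lfloor>3 * real n / 2\<rfloor> = n + n div 2"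
proof -
  have "3 * real n / 2 = real (3 * n) / real (2::nat)" by simp
  then have "\<lfloor>3 * real n / 2\<rfloor> = int ((3 * n) div 2)" by (simp only: floor_divide_of_nat_eq)
  then show ?thesis by simp
qed

lemma six_dvd: fixes c :: int assumes "even c" "3 dvd c" shows "\<exists>i. c = 6 * i"
proof -
  obtain j where j: "c = 3 * j" using assms(2) by (elim dvdE)
  then have "even j" using assms(1) by simp
  then obtain i where "j = 2 * i" by (elim evenE)
  then show ?thesis using j by (intro exI[of _ i]) simp
qed

theorem mainTheorem13:
  fixes V :: "'a set" and E :: "'a \<Rightarrow> 'a \<Rightarrow> bool" and v :: 'a and k :: int
  assumes "is_tree V E"
    and "is_leaf V E v"
    and "k \<ge> 1"
    and "int (card (nbhd_eq V E v 2)) = \<lceil>real (card V) / 2\<rceil> - 4 + k"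
    and "int (card (nbhd_ge V E v 4)) \<ge> k"
  shows "diam_C3 V E \<ge> enat (nat \<lfloor>3 * real (card V) / 2\<rfloor> + 1)"
proof -
  have vV: "v \<in> V" using assms(2) unfolding is_leaf_def by simp
  interpret treeloc V E v using assms(1) vV by unfold_locales
  define n where "n = card V"
  define K where "K = nat k"
  have kK: "k = int K" using assms(3) K_def by simp
  have K1: "K \<ge> 1" using assms(3) K_def by simp
  have N2: "nbhd_eq V E v 2 = {x\<in>V. D x = 2}" unfolding nbhd_eq_def using gd by auto
  have N4: "nbhd_ge V E v 4 = {x\<in>V. D x \<ge> 4}" unfolding nbhd_ge_def using gd by auto
  define m where "m = card {x\<in>V. D x = 2}"
  have hm: "int m = int ((n + 1) div 2) - 4 + int K"
    using assms(4) N2 m_def n_def kK ceil_half by simp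
  have hK: "K \<le> card {x\<in>V. D x \<ge> 4}" using assms(5) N4 kK by simp
  obtain S where S: "S \<subseteq> V" "\<And>x. x \<in> S \<Longrightarrow> D x \<ge> 4" "card S = K"
    "\<And>x y. x \<in> S \<Longrightarrow> y \<in> V \<Longrightarrow> D y = Suc (D x) \<Longrightarrow> y \<in> S"
  proof -
    define P where "P t \<longleftrightarrow> K \<le> card {x\<in>V. D x \<ge> t}" for t
    define M where "M = Max (D ` V)"
    have P4: "P 4" using hK P_def by simp
    have nP: "\<not> P (Suc M + 4)"
    proof -
      have "\<And>x. x \<in> V \<Longrightarrow> D x \<le> M" unfolding M_def using finV by simp
      then have e: "{x\<in>V. D x \<ge> Suc M + 4} = {}" by fastforce
      show ?thesis unfolding P_def e using K1 by simp
    qed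
    obtain t where t: "t \<ge> 4" "P t" "\<not> P (Suc t)" using threshold[of P 4 "Suc M + 4", OF P4 nP] by auto
    let ?A = "{x\<in>V. D x \<ge> Suc t}" and ?B = "{x\<in>V. D x = t}"
    have eqs: "{x\<in>V. D x \<ge> t} = ?B \<union> ?A" by auto
    have disj: "?B \<inter> ?A = {}" by auto
    have fA: "finite ?A" "finite ?B" using finV by auto
    have cardt: "card {x\<in>V. D x \<ge> t} = card ?B + card ?A"
      unfolding eqs using card_Un_disjoint[OF fA(2) fA(1) disj] .
    have cA: "card ?A < K" using t(3) P_def by simp
    have "K - card ?A \<le> card ?B" using t(2) cardt P_def by simp
    then obtain R where R: "R \<subseteq> ?B" "card R = K - card ?A" "finite R"
      by (rule obtain_subset_with_card_n)
    have disj2: "?A \<inter> R = {}" using R(1) by auto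
    have cS: "card (?A \<union> R) = K" using card_Un_disjoint[OF fA(1) R(3) disj2] R(2) cA by simp
    show thesis
    proof (rule that[of "?A \<union> R"])
      show "?A \<union> R \<subseteq> V" using R(1) by auto
      show "\<And>x. x \<in> ?A \<union> R \<Longrightarrow> D x \<ge> 4" using R(1) t(1) by auto
      show "card (?A \<union> R) = K" by (rule cS)
      show "\<And>x y. x \<in> ?A \<union> R \<Longrightarrow> y \<in> V \<Longrightarrow> D y = Suc (D x) \<Longrightarrow> y \<in> ?A \<union> R"
        using R(1) by auto
    qed
  qed
  define d where "d x = int (min (D x) 3) - 1 + (if x \<in> S then 1 else 0)" for x
  define hf where "hf x = - int (D x)" for x
  define hg where "hg x = hf x + 2 * d x" for x
  define f :: "'a \<Rightarrow> 3" where "f x = (if x \<in> V then of_int (hf x) else undefined)" for x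
  define g :: "'a \<Rightarrow> 3" where "g x = (if x \<in> V then of_int (hg x) else undefined)" for x
  have dstep: "d y - d x = 0 \<or> d y - d x = 1" if xy: "x \<in> V" "y \<in> V" "D y = Suc (D x)" for x y
  proof (cases "D x \<le> 2")
    case True
    then have "x \<notin> S" "y \<notin> S" using S(2) xy(3) by fastforce+
    then show ?thesis unfolding d_def using True xy(3) by simp
  next
    case False
    have "x \<in> S \<Longrightarrow> y \<in> S" using S(4) xy by blast
    then show ?thesis unfolding d_def using False xy(3) by auto
  qed
  have edge: "f a \<noteq> f b \<and> g a \<noteq> g b \<and> hg a - hg b = hf a - hf b + sig g a b - sig f a b"
    if e: "E a b" for a b
  proof -
    have ab: "a \<in> V" "b \<in> V" using Ein[OF e] by auto
    have "(hf a - hf b = 1 \<or> hf a - hf b = -1) \<and> (d a - d b = 0 \<or> d a - d b = -(hf a - hf b))"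
    proof (cases "D b = Suc (D a)")
      case True
      then show ?thesis using dstep[OF ab True] unfolding hf_def by auto
    next
      case False
      then have "D a = Suc (D b)" using D_edge[OF e] by simp
      then show ?thesis using dstep[OF ab(2) ab(1)] unfolding hf_def by auto
    qed
    then have ce: "(of_int (hf a)::3) \<noteq> of_int (hf b) \<and> (of_int (hf a + 2 * d a)::3) \<noteq> of_int (hf b + 2 * d b) \<and>
      (hf a + 2 * d a) - (hf b + 2 * d b) = hf a - hf b + (if (of_int (hf a + 2 * d a)::3) - of_int (hf b + 2 * d b) = 1 then 1 else -1)
      - (if (of_int (hf a)::3) - of_int (hf b) = 1 then 1 else -1)"
      using col_edge by blast
    show ?thesis using ce ab unfolding f_def g_def hg_def sig_def by simp
  qed
  have fC: "f \<in> col3_vertices V E"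
    unfolding col3_vertices_def proper_3col_def
  proof (intro CollectI conjI allI impI)
    show "f \<in> V \<rightarrow>\<^sub>E UNIV" unfolding PiE_def extensional_def f_def by auto
    show "f a \<noteq> f b" if "E a b" for a b using edge[OF that] by simp
  qed
  have gC: "g \<in> col3_vertices V E"
    unfolding col3_vertices_def proper_3col_def
  proof (intro CollectI conjI allI impI)
    show "g \<in> V \<rightarrow>\<^sub>E UNIV" unfolding PiE_def extensional_def g_def by auto
    show "g a \<noteq> g b" if "E a b" for a b using edge[OF that] by simp
  qed
  define T where "T = n + n div 2 + 1"
  have c0: "{x\<in>V. D x = 0} = {v}" using D_0 D_v vV by auto
  have c1: "card {x\<in>V. D x = 1} = 1"
  proof -
    have "{x\<in>V. D x = 1} = {u\<in>V. E v u}" using D_1 by auto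
    then show ?thesis using assms(2) unfolding is_leaf_def by simp
  qed
  have cS: "{x\<in>V. x \<in> S} = S" using S(1) by auto
  let ?i0 = "\<lambda>x. if D x = 0 then 1 else (0::int)"
  let ?i1 = "\<lambda>x. if D x = 1 then 1 else (0::int)"
  let ?i2 = "\<lambda>x. if D x = 2 then 1 else (0::int)"
  let ?iS = "\<lambda>x. if x \<in> S then 1 else (0::int)"
  have s0: "(\<Sum>x\<in>V. ?i0 x) = 1" using sum_ind[OF finV, of "\<lambda>x. D x = 0"] c0 by simp
  have s1: "(\<Sum>x\<in>V. ?i1 x) = 1" using sum_ind[OF finV, of "\<lambda>x. D x = 1"] c1 by simp
  have s2: "(\<Sum>x\<in>V. ?i2 x) = int m" using sum_ind[OF finV, of "\<lambda>x. D x = 2"] m_def by simp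
  have sS: "(\<Sum>x\<in>V. ?iS x) = int K" using sum_ind[OF finV, of "\<lambda>x. x \<in> S"] cS S(3) by simp
  have pw: "\<bar>d x\<bar> = 2 - ?i0 x - 2 * ?i1 x - ?i2 x + ?iS x \<and> \<bar>d x - 3\<bar> = 1 + 3 * ?i0 x + 2 * ?i1 x + ?i2 x - ?iS x
     \<and> -1 \<le> d x \<and> d x \<le> 3" for x
  proof -
    have "x \<in> S \<Longrightarrow> D x \<ge> 4" by (rule S(2))
    then consider "D x = 0" "x \<notin> S" | "D x = 1" "x \<notin> S" | "D x = 2" "x \<notin> S" | "D x = 3" "x \<notin> S"
      | "D x \<ge> 4" "x \<notin> S" | "D x \<ge> 4" "x \<in> S" by fastforce
    then show ?thesis unfolding d_def by cases auto
  qed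
  have sumA: "(\<Sum>x\<in>V. \<bar>d x\<bar>) = 2 * int n - 1 - 2 - int m + int K"
  proof -
    have "(\<Sum>x\<in>V. \<bar>d x\<bar>) = (\<Sum>x\<in>V. 2 - ?i0 x - 2 * ?i1 x - ?i2 x + ?iS x)"
      using pw by (intro sum.cong) auto
    also have "\<dots> = (\<Sum>x\<in>V. 2) - (\<Sum>x\<in>V. ?i0 x) - 2 * (\<Sum>x\<in>V. ?i1 x) - (\<Sum>x\<in>V. ?i2 x) + (\<Sum>x\<in>V. ?iS x)"
      by (simp only: sum.distrib sum_subtractf sum_distrib_left)
    also have "\<dots> = 2 * int n - 1 - 2 - int m + int K" using s0 s1 s2 sS n_def by simp
    finally show ?thesis .
  qed
  have sumB: "(\<Sum>x\<in>V. \<bar>d x - 3\<bar>) = int n + 3 + 2 + int m - int K"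
  proof -
    have "(\<Sum>x\<in>V. \<bar>d x - 3\<bar>) = (\<Sum>x\<in>V. 1 + 3 * ?i0 x + 2 * ?i1 x + ?i2 x - ?iS x)"
      using pw by (intro sum.cong) auto
    also have "\<dots> = (\<Sum>x\<in>V. 1) + 3 * (\<Sum>x\<in>V. ?i0 x) + 2 * (\<Sum>x\<in>V. ?i1 x) + (\<Sum>x\<in>V. ?i2 x) - (\<Sum>x\<in>V. ?iS x)"
      by (simp only: sum.distrib sum_subtractf sum_distrib_left)
    also have "\<dots> = int n + 3 + 2 + int m - int K" using s0 s1 s2 sS n_def by simp
    finally show ?thesis .
  qed
  have nn: "n div 2 + (n + 1) div 2 = n" by presburger
  have bound: "int T \<le> (\<Sum>x\<in>V. \<bar>d x + 3 * i\<bar>)" for i :: int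
  proof (cases "i \<ge> 0")
    case True
    have "(\<Sum>x\<in>V. \<bar>d x\<bar>) \<le> (\<Sum>x\<in>V. \<bar>d x + 3 * i\<bar>)"
    proof (rule sum_mono)
      fix x assume "x \<in> V"
      have "-1 \<le> d x" using pw by blast
      then show "\<bar>d x\<bar> \<le> \<bar>d x + 3 * i\<bar>" using True by arith
    qed
    moreover have "int T \<le> (\<Sum>x\<in>V. \<bar>d x\<bar>)" using sumA hm nn unfolding T_def by simp
    ultimately show ?thesis by simp
  next
    case False
    have "(\<Sum>x\<in>V. \<bar>d x - 3\<bar>) \<le> (\<Sum>x\<in>V. \<bar>d x + 3 * i\<bar>)"
    proof (rule sum_mono)
      fix x assume "x \<in> V"
      have "d x \<le> 3" using pw by blast
      then show "\<bar>d x - 3\<bar> \<le> \<bar>d x + 3 * i\<bar>" using False by arith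
    qed
    moreover have "int T \<le> (\<Sum>x\<in>V. \<bar>d x - 3\<bar>)" using sumB hm nn unfolding T_def by simp
    ultimately show ?thesis by simp
  qed
  have walks: "T \<le> length cs - 1"
    if cs: "is_walk (col3_adj V) cs" "set cs \<subseteq> col3_vertices V E" "hd cs = f" "last cs = g" for cs
  proof -
    have h0: "\<forall>x\<in>V. of_int (hf x) = hd cs x" using cs(3) unfolding f_def by simp
    obtain H' where H': "\<forall>x\<in>V. of_int (H' x) = last cs x" "\<forall>x. even (H' x - hf x)"
      "\<forall>a b. E a b \<longrightarrow> H' a - H' b - sig (last cs) a b = hf a - hf b - sig (hd cs) a b"
      "(\<Sum>x\<in>V. \<bar>H' x - hf x\<bar>) \<le> 2 * int (length cs - 1)"
      using walk_inv[of E V cs hf, OF _ Eirr finV cs(1) cs(2) h0] Ein by blast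
    define C where "C x = H' x - hg x" for x
    have Cedge: "\<forall>a b. E a b \<longrightarrow> C a = C b"
    proof (intro allI impI)
      fix a b assume e: "E a b"
      have "H' a - H' b - sig g a b = hf a - hf b - sig f a b" using H'(3) e cs by simp
      moreover have "hg a - hg b = hf a - hf b + sig g a b - sig f a b" using edge[OF e] by simp
      ultimately show "C a = C b" unfolding C_def by linarith
    qed
    have Cconst: "C x = C v" if xV: "x \<in> V" for x
    proof -
      obtain xs where w: "is_walk E xs" "set xs \<subseteq> V" "hd xs = v" "last xs = x"
        using walkD[OF xV] by blast
      show ?thesis using is_walk_const[OF w(1) Cedge] w by simp
    qed
    have "(of_int (H' v)::3) = g v" using H'(1) vV cs(4) by simp
    then have "(of_int (C v)::3) = 0" unfolding C_def g_def using vV by (simp add: of_int_diff)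
    then have d3: "3 dvd C v" by (rule of_int3_0)
    have "even (C v)"
    proof -
      have "C v = (H' v - hf v) - 2 * d v" unfolding C_def hg_def by simp
      then show ?thesis using H'(2) by simp
    qed
    then obtain i where i: "C v = 6 * i" using d3 six_dvd by blast
    have "\<forall>x\<in>V. \<bar>H' x - hf x\<bar> = 2 * \<bar>d x + 3 * i\<bar>"
    proof
      fix x assume xV: "x \<in> V"
      have "H' x - hf x = 2 * (d x + 3 * i)" using Cconst[OF xV] i unfolding C_def hg_def by simp
      then show "\<bar>H' x - hf x\<bar> = 2 * \<bar>d x + 3 * i\<bar>" by (simp only: abs_mult)
    qed
    then have "(\<Sum>x\<in>V. \<bar>H' x - hf x\<bar>) = 2 * (\<Sum>x\<in>V. \<bar>d x + 3 * i\<bar>)"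
      by (simp add: sum_distrib_left)
    then have "(\<Sum>x\<in>V. \<bar>d x + 3 * i\<bar>) \<le> int (length cs - 1)" using H'(4) by simp
    then show ?thesis using bound[of i] by simp
  qed
  have "enat T \<le> gdist (col3_vertices V E) (col3_adj V) f g"
    by (rule gdist_lower) (rule walks)
  also have "\<dots> \<le> (SUP w\<in>col3_vertices V E. gdist (col3_vertices V E) (col3_adj V) f w)"
    by (rule SUP_upper[OF gC])
  also have "\<dots> \<le> diam_C3 V E"
    unfolding diam_C3_def gdiam_def by (rule SUP_upper[OF fC])
  finally have "enat T \<le> diam_C3 V E" .
  moreover have "nat \<lfloor>3 * real (card V) / 2\<rfloor> + 1 = T" using floor_3half n_def T_def by simp
  ultimately show ?thesis by simp
qed

end
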